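(* Let $F_v$ be a non-archimedean local field with ring of integers $\mathcal{O}_{F_v}$, uniformizer $\varpi_v$ and residue field of size $q_v$. Let $e\ge0$ be an integer and let $\phi_v$ be the characteristic function of $\mathrm{Z}(F_v)\mathrm{K}_{v,e}$. Let $(m,u)\in\mathcal{O}_{F_v}\times\mathcal{O}_{F_v}^\times$, $\gamma_{m,u}=\begin{pmatrix}0&1\\-u&m\end{pmatrix}$, $f_v=\mathrm{val}_v(m^2-4u)$, and let $N_v$ be the number of $t\in\mathcal{O}_{F_v}/\varpi_v\mathcal{O}_{F_v}$ with $t^2-mt+u=0$. Then \[ \left|\int_{F_v^\times}\int_{F_v}\phi_v\!\left(\begin{pmatrix}1&x\\0&y\end{pmatrix}^{-1}\gamma_{m,u}\begin{pmatrix}1&x\\0&y\end{pmatrix}\right)\frac{d_vx\,d_vy}{|y|_v^2}\right|\le\begin{cases}\dfrac{q_v-1+N_v}{q_v} & \text{if } e=f_v=0,\\[2mm] 4\,q_v^{-e+\frac{f_v}{2}} & \text{otherwise.}\end{cases} \]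
   Context: $\mathrm{Z}(F_v)$ is the center (scalar matrices) of $\mathrm{GL}_2(F_v)$; $\mathrm{K}_{v,e}=\{\begin{pmatrix}a&b\\c&d\end{pmatrix}\in\mathrm{GL}_2(\mathcal{O}_{F_v}): \varpi_v^e\mid c\}$; $d_vx$ is the additive Haar measure on $F_v$ with $\mathrm{Vol}(\mathcal{O}_{F_v})=1$ and $|\cdot|_v$ the normalized absolute value. (In the paper the left side is the orbital integral $\int_{\overline{\mathrm{G}_{\gamma_{m,u}}(F_v)}\backslash\overline{\mathrm{G}}(F_v)}\phi_v(g^{-1}\gamma_{m,u}g)\,dg$, with the quotient measure defined to be $d_vx\,d_vy/|y|_v^2$ on representatives $\begin{pmatrix}1&x\\0&y\end{pmatrix}$ and zero on the other representatives.) *)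

theory Defs
  imports "HOL-Analysis.Analysis"
begin

text \<open>A non-archimedean local field is modelled as a field type 'a together with a
normalized discrete valuation v (v is only meaningful on nonzero elements; the
value at 0 plays no role and stands for +infinity), complete, with finite residue field.\<close>

definition val_axioms :: "('a::field \<Rightarrow> int) \<Rightarrow> bool" where
  "val_axioms v \<longleftrightarrow>
     (\<forall>x y. x \<noteq> 0 \<longrightarrow> y \<noteq> 0 \<longrightarrow> v (x * y) = v x + v y) \<and>
     (\<forall>x y. x \<noteq> 0 \<longrightarrow> y \<noteq> 0 \<longrightarrow> x + y \<noteq> 0 \<longrightarrow> min (v x) (v y) \<le> v (x + y)) \<and>
     (\<forall>n. \<exists>x. x \<noteq> 0 \<and> v x = n)"

definition vball :: "('a::field \<Rightarrow> int) \<Rightarrow> 'a \<Rightarrow> int \<Rightarrow> 'a set" where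
  "vball v a n = {x. x = a \<or> n \<le> v (x - a)}"

definition vint :: "('a::field \<Rightarrow> int) \<Rightarrow> 'a set" where
  "vint v = vball v 0 0"

definition vmax :: "('a::field \<Rightarrow> int) \<Rightarrow> 'a set" where
  "vmax v = vball v 0 1"

definition residue :: "('a::field \<Rightarrow> int) \<Rightarrow> 'a \<Rightarrow> 'a set" where
  "residue v t = {s \<in> vint v. s - t \<in> vmax v}"

definition resq :: "('a::field \<Rightarrow> int) \<Rightarrow> nat" where
  "resq v = card (residue v ` vint v)"

definition vcomplete :: "('a::field \<Rightarrow> int) \<Rightarrow> bool" where
  "vcomplete v \<longleftrightarrow>
     (\<forall>s :: nat \<Rightarrow> 'a.
        (\<forall>n. \<exists>K. \<forall>i\<ge>K. \<forall>j\<ge>K. s i \<in> vball v (s j) n) \<longrightarrow>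
        (\<exists>l. \<forall>n. \<exists>K. \<forall>i\<ge>K. s i \<in> vball v l n))"

definition nonarch_local_field :: "('a::field \<Rightarrow> int) \<Rightarrow> bool" where
  "nonarch_local_field v \<longleftrightarrow>
     val_axioms v \<and> vcomplete v \<and> finite (residue v ` vint v)"

definition haar_measure :: "('a::field \<Rightarrow> int) \<Rightarrow> 'a measure \<Rightarrow> bool" where
  "haar_measure v M \<longleftrightarrow>
     space M = UNIV \<and>
     sets M = sigma_sets UNIV (range (\<lambda>(a, n). vball v a n)) \<and>
     (\<forall>A\<in>sets M. \<forall>a. emeasure M ((\<lambda>x. a + x) ` A) = emeasure M A) \<and>
     emeasure M (vint v) = 1"

definition absv :: "('a::field \<Rightarrow> int) \<Rightarrow> 'a \<Rightarrow> real" where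
  "absv v x = (if x = 0 then 0 else real (resq v) powr (- real_of_int (v x)))"

text \<open>2x2 matrices (a,b,c,d) = [[a,b],[c,d]].\<close>
type_synonym 'a mat2 = "'a \<times> 'a \<times> 'a \<times> 'a"

definition m2mul :: "'a::field mat2 \<Rightarrow> 'a mat2 \<Rightarrow> 'a mat2" where
  "m2mul A B = (case A of (a, b, c, d) \<Rightarrow> case B of (a', b', c', d') \<Rightarrow>
      (a * a' + b * c', a * b' + b * d', c * a' + d * c', c * b' + d * d'))"

definition m2det :: "'a::field mat2 \<Rightarrow> 'a" where
  "m2det A = (case A of (a, b, c, d) \<Rightarrow> a * d - b * c)"

definition m2inv :: "'a::field mat2 \<Rightarrow> 'a mat2" where
  "m2inv A = (case A of (a, b, c, d) \<Rightarrow>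
      (d / m2det A, - b / m2det A, - c / m2det A, a / m2det A))"

definition m2scale :: "'a::field \<Rightarrow> 'a mat2 \<Rightarrow> 'a mat2" where
  "m2scale z A = (case A of (a, b, c, d) \<Rightarrow> (z * a, z * b, z * c, z * d))"

definition Kve :: "('a::field \<Rightarrow> int) \<Rightarrow> nat \<Rightarrow> 'a mat2 set" where
  "Kve v e = {(a, b, c, d). a \<in> vint v \<and> b \<in> vint v \<and> c \<in> vint v \<and> d \<in> vint v \<and>
       c \<in> vball v 0 (int e) \<and> m2det (a, b, c, d) \<noteq> 0 \<and> v (m2det (a, b, c, d)) = 0}"

definition ZK :: "('a::field \<Rightarrow> int) \<Rightarrow> nat \<Rightarrow> 'a mat2 set" where
  "ZK v e = {g. \<exists>z k. z \<noteq> 0 \<and> k \<in> Kve v e \<and> g = m2scale z k}"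

definition gam :: "'a::field \<Rightarrow> 'a \<Rightarrow> 'a mat2" where
  "gam m u = (0, 1, - u, m)"

definition gxy :: "'a::field \<Rightarrow> 'a \<Rightarrow> 'a mat2" where
  "gxy x y = (1, x, 0, y)"

end

theory Submission
  imports Defs
begin


locale VF =
  fixes v :: "'a::field \<Rightarrow> int"
  assumes VA: "val_axioms v"
begin

lemma vmult: "x \<noteq> 0 \<Longrightarrow> y \<noteq> 0 \<Longrightarrow> v (x * y) = v x + v y"
  using VA unfolding val_axioms_def by blast
lemma vadd: "x \<noteq> 0 \<Longrightarrow> y \<noteq> 0 \<Longrightarrow> x + y \<noteq> 0 \<Longrightarrow> min (v x) (v y) \<le> v (x + y)"
  using VA unfolding val_axioms_def by blast
lemma vsurj: "\<exists>x. x \<noteq> 0 \<and> v x = n"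
  using VA unfolding val_axioms_def by blast
lemma v1[simp]: "v 1 = 0"
  using vmult[of 1 1] by simp
lemma vm1[simp]: "v (-1) = 0"
  using vmult[of "-1" "-1"] by simp
lemma vneg[simp]: "v (- x) = v x"
proof (cases "x = 0")
  case False then show ?thesis using vmult[of "-1" x] by simp
qed simp
lemma vinv: "x \<noteq> 0 \<Longrightarrow> v (inverse x) = - v x"
  using vmult[of x "inverse x"] by simp
lemma vdiv: "x \<noteq> 0 \<Longrightarrow> y \<noteq> 0 \<Longrightarrow> v (x / y) = v x - v y"
  by (simp add: divide_inverse vmult vinv)

definition ge :: "'a \<Rightarrow> int \<Rightarrow> bool" where
  "ge x n \<longleftrightarrow> x = 0 \<or> n \<le> v x"

lemma ge0[simp]: "ge 0 n" by (simp add: ge_def)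
lemma ge_nz: "x \<noteq> 0 \<Longrightarrow> ge x n \<longleftrightarrow> n \<le> v x" by (simp add: ge_def)
lemma ge_neg[simp]: "ge (- x) n \<longleftrightarrow> ge x n" by (simp add: ge_def)
lemma ge_mono: "ge x n \<Longrightarrow> m \<le> n \<Longrightarrow> ge x m" by (auto simp: ge_def)
lemma ge_add: "ge x n \<Longrightarrow> ge y n \<Longrightarrow> ge (x + y) n"
  unfolding ge_def
  by (cases "x = 0"; cases "y = 0"; cases "x + y = 0"; use vadd[of x y] in auto)
lemma ge_diff: "ge x n \<Longrightarrow> ge y n \<Longrightarrow> ge (x - y) n"
  using ge_add[of x n "-y"] by simp
lemma ge_diff_sym: "ge (x - y) n \<longleftrightarrow> ge (y - x) n"
  using ge_neg[of "x - y" n] by simp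
lemma ge_mult: "ge x a \<Longrightarrow> ge y b \<Longrightarrow> ge (x * y) (a + b)"
  unfolding ge_def by (cases "x = 0"; cases "y = 0"; use vmult[of x y] in auto)
lemma ge_mult_cancel: "x \<noteq> 0 \<Longrightarrow> ge (x * y) n \<Longrightarrow> ge y (n - v x)"
  unfolding ge_def by (cases "y = 0"; use vmult[of x y] in auto)
lemma ge_mult_iff: "x \<noteq> 0 \<Longrightarrow> ge (x * y) n \<longleftrightarrow> ge y (n - v x)"
  unfolding ge_def by (cases "y = 0"; use vmult[of x y] in auto)
lemma ge1[simp]: "ge 1 0" by (simp add: ge_def)
lemma ge_not1: "\<not> ge 1 1" by (simp add: ge_def)
lemma ge4: "ge (4::'a) 0"
proof -
  have "ge (1+1::'a) 0" by (rule ge_add) auto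
  then have "ge ((1+1)*(1+1)::'a) 0" using ge_mult[of "1+1::'a" 0 "1+1" 0] by simp
  then show ?thesis by (simp add: algebra_simps)
qed

lemma ult_eq: assumes "x \<noteq> 0" "ge y (v x + 1)" shows "x + y \<noteq> 0" "v (x + y) = v x"
proof -
  show nz: "x + y \<noteq> 0"
  proof
    assume "x + y = 0" then have "y = - x" by (metis add.commute add_eq_0_iff)
    then show False using assms by (simp add: ge_def)
  qed
  show "v (x + y) = v x"
  proof (cases "y = 0")
    case False
    have y: "v x + 1 \<le> v y" using assms False by (simp add: ge_def)
    have "min (v x) (v y) \<le> v (x + y)" using vadd[OF assms(1) False nz] .
    then have a: "v x \<le> v (x + y)" using y by simp
    have "min (v (x+y)) (v (-y)) \<le> v (x + y + - y)" using vadd[OF nz, of "-y"] False assms(1) by simp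
    then have "min (v (x+y)) (v y) \<le> v x" by simp
    then show ?thesis using a y by linarith
  qed simp
qed

lemma vball_ge: "vball v a n = {x. ge (x - a) n}"
  by (auto simp: vball_def ge_def)
lemma vint_ge: "vint v = {x. ge x 0}" by (simp add: vint_def vball_ge)
lemma vmax_ge: "vmax v = {x. ge x 1}" by (simp add: vmax_def vball_ge)

lemma Qdiff: "((u::'a)*b^2 - m*b + 1) - (u*a^2 - m*a + 1) = (b - a) * ((2*u*a - m) + u*(b - a))"
  by (simp add: algebra_simps power2_eq_square)
lemma Qdiff2: "((u::'a)*a^2 - m*a + 1) - (u*b^2 - m*b + 1) = (a - b) * (u*(a + b) - m)"
  by (simp add: algebra_simps power2_eq_square)
lemma Qdisc: "(2*(u::'a)*a - m)^2 = (m^2 - 4*u) + 4*u*(u*a^2 - m*a + 1)"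
  by (simp add: algebra_simps power2_eq_square)

lemma pairA: assumes "ge (u*a^2 - m*a + 1) k" "ge (u*b^2 - m*b + 1) k" "\<not> ge (a - b) r"
  shows "ge (u*(a + b) - m) (k - r + 1)"
proof -
  have nz: "a - b \<noteq> 0" using assms(3) by auto
  have lt: "v (a - b) \<le> r - 1" using assms(3) nz by (simp add: ge_def)
  have "ge ((a - b) * (u*(a + b) - m)) k" using ge_diff[OF assms(1,2)] Qdiff2[of u a m b] by simp
  then have "ge (u*(a + b) - m) (k - v (a - b))" using ge_mult_cancel[OF nz] by blast
  then show ?thesis by (rule ge_mono) (use lt in simp)
qed

lemma threeA: assumes u: "u \<noteq> 0" "v u = 0"
  and Q: "ge (u*a^2 - m*a + 1) k" "ge (u*b^2 - m*b + 1) k" "ge (u*c^2 - m*c + 1) k"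
  and r: "2*r \<le> k + 1"
  shows "ge (a - b) r \<or> ge (a - c) r \<or> ge (b - c) r"
proof (rule ccontr)
  assume "\<not> ?thesis"
  then have n: "\<not> ge (a - b) r" "\<not> ge (a - c) r" "\<not> ge (b - c) r" by auto
  have "ge ((u*(a + b) - m) - (u*(a + c) - m)) (k - r + 1)"
    by (rule ge_diff; rule pairA) (use Q n in auto)
  moreover have "(u*(a + b) - m) - (u*(a + c) - m) = u * (b - c)" by (simp add: algebra_simps)
  ultimately have "ge (b - c) (k - r + 1)" using ge_mult_cancel[OF u(1)] u(2) by fastforce
  then have "ge (b - c) r" by (rule ge_mono) (use r in simp)
  then show False using n by simp
qed

lemma B0: assumes u: "u \<noteq> 0" "v u = 0" and D: "m^2 - 4*u \<noteq> 0" "v (m^2 - 4*u) < k"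
  and Q: "ge (u*a^2 - m*a + 1) k"
  shows "2*u*a - m \<noteq> 0" "2 * v (2*u*a - m) = v (m^2 - 4*u)"
proof -
  have g: "ge (4*u*(u*a^2 - m*a + 1)) (0 + 0 + k)"
    by (rule ge_mult[OF ge_mult[OF ge4]]) (use Q u in \<open>auto simp: ge_def\<close>)
  have g2: "ge (4*u*(u*a^2 - m*a + 1)) (v (m^2 - 4*u) + 1)"
    by (rule ge_mono[OF g]) (use D in simp)
  note e = ult_eq[OF D(1) g2]
  have sq: "(2*u*a - m)^2 \<noteq> 0" "v ((2*u*a - m)^2) = v (m^2 - 4*u)"
    using e Qdisc[of u a m] by auto
  show nz: "2*u*a - m \<noteq> 0" using sq(1) by auto
  show "2 * v (2*u*a - m) = v (m^2 - 4*u)"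
    using sq(2) vmult[OF nz nz] by (simp add: power2_eq_square)
qed

lemma B1: assumes u: "u \<noteq> 0" "v u = 0" and D: "m^2 - 4*u \<noteq> 0" "v (m^2 - 4*u) < k"
  and Q: "ge (u*a^2 - m*a + 1) k" "ge (u*b^2 - m*b + 1) k"
  and n: "\<not> ge (b - a) (k - v (2*u*a - m))"
  shows "ge ((2*u*a - m) + u*(b - a)) (k - v (2*u*a - m))" "b - a \<noteq> 0" "v (b - a) = v (2*u*a - m)"
proof -
  define w where "w = 2*u*a - m"
  have wnz: "w \<noteq> 0" using B0[OF u D Q(1)] by (simp add: w_def)
  show nz: "b - a \<noteq> 0" using n by auto
  have lt: "v (b - a) < k - v w" using n nz by (simp add: ge_def w_def)
  have "ge ((b - a) * (w + u*(b - a))) k" using ge_diff[OF Q(2,1)] Qdiff[of u b m a] by (simp add: w_def)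
  then have g: "ge (w + u*(b - a)) (k - v (b - a))" using ge_mult_cancel[OF nz] by blast
  then have g1: "ge (- (w + u*(b - a))) (v w + 1)" unfolding ge_neg by (rule ge_mono) (use lt in simp)
  note e = ult_eq[OF wnz g1]
  have "w + - (w + u * (b - a)) = - (u * (b - a))" by simp
  then have "v (u * (b - a)) = v w" using e(2) by simp
  then have dv: "v (b - a) = v w" using vmult[OF u(1) nz] u(2) by simp
  then show "v (b - a) = v (2*u*a - m)" by (simp add: w_def)
  show "ge ((2*u*a - m) + u*(b - a)) (k - v (2*u*a - m))" using g dv by (simp add: w_def)
qed

lemma threeB: assumes u: "u \<noteq> 0" "v u = 0" and D: "m^2 - 4*u \<noteq> 0" "v (m^2 - 4*u) < k"
  and Q: "ge (u*a^2 - m*a + 1) k" "ge (u*b^2 - m*b + 1) k" "ge (u*c^2 - m*c + 1) k"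
  shows "ge (a - b) (k - v (m^2 - 4*u) div 2) \<or> ge (a - c) (k - v (m^2 - 4*u) div 2)
     \<or> ge (b - c) (k - v (m^2 - 4*u) div 2)"
proof (rule ccontr)
  define w where "w = 2*u*a - m"
  have "2 * v w = v (m^2 - 4*u)" using B0[OF u D Q(1)] by (simp add: w_def)
  then have r: "k - v (m^2 - 4*u) div 2 = k - v w" by simp
  assume "\<not> ?thesis"
  then have n: "\<not> ge (b - a) (k - v w)" "\<not> ge (c - a) (k - v w)" "\<not> ge (b - c) (k - v w)"
    unfolding r using ge_diff_sym by blast+
  have "ge ((w + u*(b - a)) - (w + u*(c - a))) (k - v w)"
    by (rule ge_diff) (use B1(1)[OF u D Q(1,2)] B1(1)[OF u D Q(1,3)] n in \<open>auto simp: w_def\<close>)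
  moreover have "(w + u*(b - a)) - (w + u*(c - a)) = u * (b - c)" by (simp add: algebra_simps)
  ultimately have "ge (b - c) (k - v w)" using ge_mult_cancel[OF u(1)] u(2) by fastforce
  then show False using n by simp
qed

lemma three: assumes u: "u \<noteq> 0" "v u = 0" and D: "m^2 - 4*u \<noteq> 0" "0 \<le> v (m^2 - 4*u)"
  and k: "0 \<le> k"
  and Q: "ge (u*a^2 - m*a + 1) k" "ge (u*b^2 - m*b + 1) k" "ge (u*c^2 - m*c + 1) k"
  shows "ge (a - b) (k - v (m^2 - 4*u) div 2) \<or> ge (a - c) (k - v (m^2 - 4*u) div 2)
     \<or> ge (b - c) (k - v (m^2 - 4*u) div 2)"
proof (cases "v (m^2 - 4*u) < k")
  case True then show ?thesis using threeB[OF u D(1) True Q] by blast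
next
  case False
  have aux: "\<And>k f::int. k \<le> f \<Longrightarrow> 2 * (k - f div 2) \<le> k + 1" by presburger
  have "2 * (k - v (m^2 - 4*u) div 2) \<le> k + 1" using False by (intro aux) simp
  then show ?thesis using threeA[OF u Q] by blast
qed

lemma cover2: assumes "\<And>a b c. a \<in> S \<Longrightarrow> b \<in> S \<Longrightarrow> c \<in> S \<Longrightarrow> ge (a - b) r \<or> ge (a - c) r \<or> ge (b - c) r"
  shows "\<exists>c1 c2. S \<subseteq> vball v c1 r \<union> vball v c2 r"
proof (cases "S = {}")
  case False
  then obtain a where a: "a \<in> S" by blast
  show ?thesis
  proof (cases "S \<subseteq> vball v a r")
    case True then show ?thesis by blast
  next
    case False
    then obtain b where b: "b \<in> S" "\<not> ge (b - a) r" by (auto simp: vball_ge)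
    have "S \<subseteq> vball v a r \<union> vball v b r"
    proof
      fix c assume c: "c \<in> S"
      from assms[OF a b(1) c] b(2) have "ge (a - c) r \<or> ge (b - c) r" using ge_diff_sym by blast
      then show "c \<in> vball v a r \<union> vball v b r" using ge_diff_sym by (auto simp: vball_ge)
    qed
    then show ?thesis by blast
  qed
qed auto

lemma special: assumes u: "u \<noteq> 0" "v u = 0" and D: "m^2 - 4*u \<noteq> 0" "v (m^2 - 4*u) = 0"
  and k: "1 \<le> k"
  and Q: "ge (u*a^2 - m*a + 1) k" "ge (u*b^2 - m*b + 1) k" and ab: "ge (b - a) 1"
  shows "ge (b - a) k"
proof (rule ccontr)
  assume n: "\<not> ge (b - a) k"
  have D2: "v (m^2 - 4*u) < k" using D k by simp
  have w: "v (2*u*a - m) = 0" using B0(2)[OF u D(1) D2 Q(1)] D(2) by simp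
  have "b - a \<noteq> 0" "v (b - a) = 0" using B1(2,3)[OF u D(1) D2 Q] n w by auto
  then show False using ab by (simp add: ge_def)
qed

end



context VF begin

lemma res_ball: assumes t: "t \<in> vint v" shows "residue v t = vball v t 1"
proof (intro set_eqI iffI)
  fix x assume "x \<in> residue v t" then show "x \<in> vball v t 1"
    by (simp add: residue_def vmax_ge vball_ge)
next
  fix x assume x: "x \<in> vball v t 1"
  then have x1: "ge (x - t) 1" by (simp add: vball_ge)
  have "ge (t + (x - t)) 0" using t x1 by (intro ge_add) (auto intro: ge_mono simp: vint_ge)
  then show "x \<in> residue v t" using x1 by (simp add: residue_def vmax_ge vint_ge)
qed

lemma res_mem: "t \<in> vint v \<Longrightarrow> t \<in> residue v t"
  by (simp add: res_ball vball_def)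

lemma res_sub: "residue v t \<subseteq> vint v"
  by (auto simp: residue_def)

lemma res_eq: assumes "s \<in> vint v" "t \<in> vint v"
  shows "residue v s = residue v t \<longleftrightarrow> ge (s - t) 1"
proof
  assume "residue v s = residue v t"
  then have "s \<in> residue v t" using res_mem[OF assms(1)] by simp
  then show "ge (s - t) 1" using assms by (simp add: res_ball vball_ge)
next
  assume a: "ge (s - t) 1"
  have "\<And>x. ge (x - s) 1 \<longleftrightarrow> ge (x - t) 1"
  proof -
    fix x
    have "x - t = (x - s) + (s - t)" "x - s = (x - t) - (s - t)" by simp_all
    then show "ge (x - s) 1 \<longleftrightarrow> ge (x - t) 1" using a ge_add ge_diff by metis
  qed
  then show "residue v s = residue v t" using assms by (simp add: res_ball vball_ge)
qed

lemma res_disj: assumes "s \<in> vint v" "t \<in> vint v" "x \<in> residue v s" "x \<in> residue v t"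
  shows "residue v s = residue v t"
proof -
  have "ge (x - s) 1" "ge (x - t) 1" using assms by (simp_all add: res_ball vball_ge)
  then have "ge ((x - t) - (x - s)) 1" by (rule ge_diff[rotated])
  then show ?thesis using assms(1,2) res_eq by simp
qed

lemma vint_Union: "vint v = (\<Union>\<rho>\<in>residue v ` vint v. \<rho>)"
  using res_mem res_sub by blast

lemma scale_ball: assumes "w \<noteq> 0"
  shows "(\<lambda>x. w * x) ` vball v a n = vball v (w * a) (n + v w)"
proof -
  have e: "\<And>s. w * s - w * a = w * (s - a)" by (simp add: algebra_simps)
  show ?thesis
  proof (intro set_eqI iffI)
    fix x assume "x \<in> (\<lambda>x. w * x) ` vball v a n"
    then obtain s where "x = w * s" "ge (s - a) n" by (auto simp: vball_ge)
    then show "x \<in> vball v (w * a) (n + v w)" using ge_mult_iff[OF assms] by (simp add: vball_ge e)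
  next
    fix x assume x: "x \<in> vball v (w * a) (n + v w)"
    have xx: "x = w * (x / w)" using assms by simp
    have "ge (w * (x / w - a)) (n + v w)" using x xx e[of "x / w"] by (simp add: vball_ge)
    then have "x / w \<in> vball v a n" using ge_mult_iff[OF assms] by (simp add: vball_ge)
    then show "x \<in> (\<lambda>x. w * x) ` vball v a n" using xx by blast
  qed
qed

lemma transl_ball: "vball v a n = (\<lambda>x. a + x) ` vball v 0 n"
proof (intro set_eqI iffI)
  fix x assume "x \<in> vball v a n"
  then have "x - a \<in> vball v 0 n" "x = a + (x - a)" by (auto simp: vball_ge)
  then show "x \<in> (\<lambda>x. a + x) ` vball v 0 n" by blast
qed (auto simp: vball_ge)

end

locale LFM = VF v for v :: "'a::field \<Rightarrow> int" +
  fixes M :: "'a measure"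
  assumes fin: "finite (residue v ` vint v)" and H: "haar_measure v M"
begin

abbreviation "q \<equiv> resq v"

lemma sets_M: "sets M = sigma_sets UNIV (range (\<lambda>(a, n). vball v a n))"
  using H by (simp add: haar_measure_def)

lemma ball_sets[measurable]: "vball v a n \<in> sets M"
  unfolding sets_M by (rule sigma_sets.Basic) auto

lemma transl_inv: "A \<in> sets M \<Longrightarrow> emeasure M ((\<lambda>x. a + x) ` A) = emeasure M A"
  using H by (simp add: haar_measure_def)

lemma vint_meas: "emeasure M (vint v) = 1"
  using H by (simp add: haar_measure_def)

lemma ball_meas0: "emeasure M (vball v a n) = emeasure M (vball v 0 n)"
  using transl_ball[of a n] transl_inv[OF ball_sets] by metis

lemma q_ge2: "2 \<le> q"
proof -
  have 0: "0 \<in> vint v" "1 \<in> vint v" by (auto simp: vint_ge)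
  have "residue v 0 \<noteq> residue v 1" using res_eq[OF 0] ge_not1 by simp
  then have "card {residue v 0, residue v 1} = 2" by simp
  moreover have "{residue v 0, residue v 1} \<subseteq> residue v ` vint v" using 0 by blast
  ultimately show ?thesis unfolding resq_def by (metis card_mono fin)
qed

lemma ball_split: "emeasure M (vball v 0 n) = of_nat q * emeasure M (vball v 0 (n + 1))"
proof -
  obtain w where w: "w \<noteq> 0" "v w = n" using vsurj by blast
  define I where "I = residue v ` vint v"
  define F where "F = (\<lambda>\<rho>. (\<lambda>x. w * x) ` \<rho>)"
  have Fr: "F (residue v t) = vball v (w * t) (n + 1)" if "t \<in> vint v" for t
    using scale_ball[OF w(1), of t 1] that w by (simp add: F_def res_ball add.commute)
  have "vball v 0 n = (\<lambda>x. w * x) ` vint v"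
    using scale_ball[OF w(1), of 0 0] w by (simp add: vint_def)
  also have "\<dots> = (\<Union>\<rho>\<in>I. F \<rho>)" unfolding F_def I_def by (subst vint_Union) blast
  finally have U: "vball v 0 n = (\<Union>\<rho>\<in>I. F \<rho>)" .
  have sets: "F ` I \<subseteq> sets M" using Fr by (auto simp: I_def)
  have disj: "disjoint_family_on F I"
    unfolding disjoint_family_on_def
  proof (intro ballI impI)
    fix r1 r2 assume r: "r1 \<in> I" "r2 \<in> I" "r1 \<noteq> r2"
    then obtain s t where st: "s \<in> vint v" "t \<in> vint v" "r1 = residue v s" "r2 = residue v t"
      by (auto simp: I_def)
    show "F r1 \<inter> F r2 = {}"
    proof (rule ccontr)
      assume "F r1 \<inter> F r2 \<noteq> {}"
      then obtain x where "x \<in> F r1" "x \<in> F r2" by blast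
      then have "x / w \<in> residue v s" "x / w \<in> residue v t" using w(1) st by (auto simp: F_def)
      then have "residue v s = residue v t" by (rule res_disj[OF st(1,2)])
      then show False using st(3,4) r(3) by simp
    qed
  qed
  have "emeasure M (vball v 0 n) = (\<Sum>\<rho>\<in>I. emeasure M (F \<rho>))"
    unfolding U by (rule sum_emeasure[symmetric, OF sets disj]) (simp add: I_def fin)
  also have "\<dots> = (\<Sum>\<rho>\<in>I. emeasure M (vball v 0 (n + 1)))"
  proof (rule sum.cong)
    fix r assume "r \<in> I"
    then obtain t where "t \<in> vint v" "r = residue v t" by (auto simp: I_def)
    then show "emeasure M (F r) = emeasure M (vball v 0 (n + 1))" using Fr ball_meas0 by metis
  qed simp
  also have "\<dots> = of_nat q * emeasure M (vball v 0 (n + 1))" by (simp add: I_def resq_def)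
  finally show ?thesis .
qed

lemma ball_meas: "emeasure M (vball v a n) = ennreal (real q powr (- real_of_int n))"
proof -
  have qpos: "real q > 0" using q_ge2 by simp
  have "emeasure M (vball v 0 n) = ennreal (real q powr (- real_of_int n))" for n
  proof (induction n rule: int_induct[where k=0])
    case base then show ?case using vint_meas qpos by (simp add: vint_def)
  next
    case (step1 i)
    have "emeasure M (vball v 0 i) = ennreal (real q) * emeasure M (vball v 0 (i + 1))"
      using ball_split[of i] by (simp add: ennreal_of_nat_eq_real_of_nat)
    then have e: "ennreal (real q powr (- real_of_int i)) = emeasure M (vball v 0 (i + 1)) * ennreal (real q)"
      using step1(2) by (simp add: mult.commute)
    have "emeasure M (vball v 0 (i + 1)) = emeasure M (vball v 0 (i + 1)) * ennreal (real q) / ennreal (real q)"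
      by (rule ennreal_mult_divide_eq[symmetric]) (use qpos in auto)
    also have "\<dots> = ennreal (real q powr (- real_of_int i)) / ennreal (real q)" by (simp only: e)
    also have "\<dots> = ennreal (real q powr (- real_of_int i) / real q)" using qpos by (simp add: divide_ennreal)
    also have "real q powr (- real_of_int i) / real q = real q powr (- real_of_int (i + 1))"
      using qpos by (simp add: powr_diff powr_minus_divide diff_conv_add_uminus[symmetric])
    finally show ?case .
  next
    case (step2 i)
    have "emeasure M (vball v 0 (i - 1)) = ennreal (real q) * emeasure M (vball v 0 i)"
      using ball_split[of "i - 1"] by (simp add: ennreal_of_nat_eq_real_of_nat)
    also have "\<dots> = ennreal (real q * real q powr (- real_of_int i))" using step2(2) by (simp add: ennreal_mult)
    also have "real q * real q powr (- real_of_int i) = real q powr (- real_of_int (i - 1))"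
    proof -
      have "real q powr (1 + - real_of_int i) = real q powr 1 * real q powr (- real_of_int i)" by (rule powr_add)
      then show ?thesis using qpos by simp
    qed
    finally show ?case .
  qed
  then show ?thesis using ball_meas0 by simp
qed

end



context VF begin

lemma mat_eq: assumes "y \<noteq> 0"
  shows "m2mul (m2inv (gxy x y)) (m2mul (gam m u) (gxy x y)) =
    (u * (x / y), y * (u * (x / y)^2 - m * (x / y) + 1), u * (- inverse y), (m * y - u * x) / y)"
  using assms by (simp add: m2mul_def m2inv_def m2det_def gam_def gxy_def field_simps power2_eq_square)

lemma mat_cond: assumes y: "y \<noteq> 0" and u: "u \<noteq> 0" "v u = 0"
  and A: "m2mul (m2inv (gxy x y)) (m2mul (gam m u) (gxy x y)) \<in> ZK v e"
  shows "int e \<le> - v y" "ge (x / y) 0" "ge (u * (x / y)^2 - m * (x / y) + 1) (- v y)"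
proof -
  obtain z a b c d where z: "z \<noteq> 0" and K: "(a, b, c, d) \<in> Kve v e"
    and eq: "m2mul (m2inv (gxy x y)) (m2mul (gam m u) (gxy x y)) = m2scale z (a, b, c, d)"
    using A unfolding ZK_def by auto
  have Kc: "ge a 0" "ge b 0" "ge c 0" "ge d 0" "ge c (int e)" "a * d - b * c \<noteq> 0" "v (a * d - b * c) = 0"
    using K by (auto simp: Kve_def vint_ge vball_ge m2det_def)
  have e1: "z * a = u * (x / y)" "z * b = y * (u * (x / y)^2 - m * (x / y) + 1)"
    "z * c = u * (- inverse y)" "z * d = (m * y - u * x) / y"
    using eq mat_eq[OF y, of x m u] by (auto simp: m2scale_def)
  have "(z * a) * (z * d) - (z * b) * (z * c) = u"
    unfolding e1 using y by (simp add: field_simps power2_eq_square)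
  then have "(z * z) * (a * d - b * c) = u" by (simp add: algebra_simps)
  then have "v (z * z) + v (a * d - b * c) = v u" using vmult[of "z*z"] z Kc(6) by (metis mult_eq_0_iff)
  then have vz: "v z = 0" using vmult[OF z z] Kc(7) u(2) by simp
  then have gz: "ge z 0" by (simp add: ge_def)
  have "ge (z * a) (0 + 0)" by (rule ge_mult[OF gz Kc(1)])
  then have "ge (u * (x / y)) 0" using e1 by simp
  then show "ge (x / y) 0" using ge_mult_iff[OF u(1), of "x / y" 0] u(2) by simp
  have "ge (z * b) (0 + 0)" by (rule ge_mult[OF gz Kc(2)])
  then have "ge (y * (u * (x / y)^2 - m * (x / y) + 1)) 0" using e1 by simp
  then show "ge (u * (x / y)^2 - m * (x / y) + 1) (- v y)" using ge_mult_iff[OF y] by simp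
  have "ge (z * c) (0 + int e)" by (rule ge_mult[OF gz Kc(5)])
  then have "ge (u * (- inverse y)) (int e)" using e1 by simp
  moreover have "u * (- inverse y) \<noteq> 0" "v (u * (- inverse y)) = - v y"
    using u y vmult[of u "- inverse y"] vinv[OF y] by auto
  ultimately show "int e \<le> - v y" by (simp add: ge_def)
qed

end



context LFM begin

definition orbin :: "nat \<Rightarrow> 'a \<Rightarrow> 'a \<Rightarrow> 'a \<Rightarrow> ennreal" where
  "orbin e m u y = (\<integral>\<^sup>+ x. indicator (ZK v e) (m2mul (m2inv (gxy x y)) (m2mul (gam m u) (gxy x y))) \<partial>M)"

lemma inner_le_set: assumes "T \<in> sets M"
  and "\<And>x. m2mul (m2inv (gxy x y)) (m2mul (gam m u) (gxy x y)) \<in> ZK v e \<Longrightarrow> x \<in> T"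
  shows "orbin e m u y \<le> emeasure M T"
proof -
  have "orbin e m u y \<le> (\<integral>\<^sup>+ x. indicator T x \<partial>M)"
    unfolding orbin_def by (rule nn_integral_mono) (use assms(2) in \<open>auto simp: indicator_def\<close>)
  then show ?thesis using assms(1) by simp
qed

lemma inner_zero: assumes y: "y \<noteq> 0" and u: "u \<noteq> 0" "v u = 0" and k: "- v y < int e"
  shows "orbin e m u y = 0"
proof -
  have "orbin e m u y \<le> emeasure M {}"
    by (rule inner_le_set) (use mat_cond(1)[OF y u] k in force)+
  then show ?thesis by simp
qed

lemma qge1: "1 \<le> real q" using q_ge2 by simp

lemma inner_gen: assumes y: "y \<noteq> 0" and u: "u \<noteq> 0" "v u = 0"
  and D: "m^2 - 4*u \<noteq> 0" "0 \<le> v (m^2 - 4*u)"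
  shows "orbin e m u y \<le> ennreal (2 * real q powr (real_of_int (v (m^2 - 4*u)) / 2))"
proof (cases "- v y < int e")
  case True then show ?thesis using inner_zero[OF y u True] by simp
next
  case False
  define k where "k = - v y"
  define f where "f = v (m^2 - 4*u)"
  define r where "r = k - f div 2"
  have k0: "0 \<le> k" using False k_def by simp
  define S where "S = {t. ge (u*t^2 - m*t + 1) k}"
  have "\<exists>c1 c2. S \<subseteq> vball v c1 r \<union> vball v c2 r"
    by (rule cover2) (unfold S_def r_def f_def, use three[OF u D k0] in blast)
  then obtain c1 c2 where cov: "S \<subseteq> vball v c1 r \<union> vball v c2 r" by blast
  define T where "T = vball v (y * c1) (r + v y) \<union> vball v (y * c2) (r + v y)"
  have "orbin e m u y \<le> emeasure M T"
  proof (rule inner_le_set)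
    show "T \<in> sets M" unfolding T_def by measurable
    fix x assume "m2mul (m2inv (gxy x y)) (m2mul (gam m u) (gxy x y)) \<in> ZK v e"
    then have "x / y \<in> S" using mat_cond(3)[OF y u] by (simp add: S_def k_def)
    then have "x / y \<in> vball v c1 r \<or> x / y \<in> vball v c2 r" using cov by blast
    then have "y * (x / y) \<in> (\<lambda>x. y * x) ` vball v c1 r \<or> y * (x / y) \<in> (\<lambda>x. y * x) ` vball v c2 r"
      by blast
    then show "x \<in> T" unfolding T_def scale_ball[OF y] using y by simp
  qed
  also have "\<dots> \<le> emeasure M (vball v (y * c1) (r + v y)) + emeasure M (vball v (y * c2) (r + v y))"
    unfolding T_def by (rule emeasure_subadditive) measurable
  also have "\<dots> = ennreal (2 * real q powr (real_of_int (f div 2)))"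
    by (simp add: ball_meas r_def k_def ennreal_plus[symmetric] del: ennreal_plus)
  also have "\<dots> \<le> ennreal (2 * real q powr (real_of_int f / 2))"
  proof -
    have "real_of_int (f div 2) \<le> real_of_int f / 2" by linarith
    then have "real q powr (real_of_int (f div 2)) \<le> real q powr (real_of_int f / 2)"
      using qge1 powr_mono by blast
    then show ?thesis by (intro ennreal_leI) simp
  qed
  finally show ?thesis by (simp add: f_def)
qed

end



context LFM begin

lemma inner_sp0: assumes y: "y \<noteq> 0" and u: "u \<noteq> 0" "v u = 0" and vy: "v y = 0"
  shows "orbin e m u y \<le> 1"
proof -
  have "orbin e m u y \<le> emeasure M (vball v 0 0)"
  proof (rule inner_le_set)
    fix x assume "m2mul (m2inv (gxy x y)) (m2mul (gam m u) (gxy x y)) \<in> ZK v e"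
    then have "ge (x / y) 0" using mat_cond(2)[OF y u] by simp
    then have "ge (y * (x / y)) 0" using ge_mult_iff[OF y, of "x / y" 0] vy by simp
    then show "x \<in> vball v 0 0" using y by (simp add: vball_ge)
  qed simp
  then show ?thesis using q_ge2 by (simp add: ball_meas)
qed

lemma unit_root: assumes c: "ge c 0" and Q: "ge (u*c^2 - m*c + 1) 1" and m: "ge m 0" and u: "u \<noteq> 0" "v u = 0"
  shows "c \<noteq> 0" "v c = 0"
proof -
  show cnz: "c \<noteq> 0" using Q ge_not1 by (auto)
  show "v c = 0"
  proof (rule ccontr)
    assume "v c \<noteq> 0"
    then have c1: "ge c 1" using c cnz by (simp add: ge_def)
    have gu: "ge u 0" using u by (simp add: ge_def)
    have "ge (u*c*c) (0 + 1 + 0)" by (intro ge_mult c1 gu) (use c in auto)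
    moreover have "ge (m*c) (0 + 1)" by (intro ge_mult c1 m)
    ultimately have a: "ge (u*c^2) 1" "ge (m*c) 1" by (simp_all add: power2_eq_square mult.assoc)
    have "ge (u*c^2 - m*c) 1" using ge_diff[OF a] .
    then have "ge ((u*c^2 - m*c + 1) - (u*c^2 - m*c)) 1" using ge_diff[OF Q] by blast
    then show False using ge_not1 by simp
  qed
qed

lemma inner_sp1: assumes y: "y \<noteq> 0" and u: "u \<noteq> 0" "v u = 0" and m: "m \<in> vint v"
  and D: "m^2 - 4*u \<noteq> 0" "v (m^2 - 4*u) = 0" and k1: "1 \<le> - v y"
  shows "orbin e m u y \<le> of_nat (card (residue v ` {t \<in> vint v. t^2 - m * t + u \<in> vmax v}))"
proof -
  define k where "k = - v y"
  have mg: "ge m 0" using m by (simp add: vint_ge)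
  define R where "R = {\<rho> \<in> residue v ` vint v. \<exists>c\<in>\<rho>. ge (u*c^2 - m*c + 1) k}"
  define cf where "cf = (\<lambda>\<rho>. SOME c. c \<in> \<rho> \<and> ge (u*c^2 - m*c + 1) k)"
  have cf: "cf \<rho> \<in> \<rho>" "ge (u*(cf \<rho>)^2 - m*(cf \<rho>) + 1) k" if "\<rho> \<in> R" for \<rho>
  proof -
    have "\<exists>c. c \<in> \<rho> \<and> ge (u*c^2 - m*c + 1) k" using that by (auto simp: R_def)
    then have "cf \<rho> \<in> \<rho> \<and> ge (u*(cf \<rho>)^2 - m*(cf \<rho>) + 1) k" unfolding cf_def by (rule someI_ex)
    then show "cf \<rho> \<in> \<rho>" "ge (u*(cf \<rho>)^2 - m*(cf \<rho>) + 1) k" by auto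
  qed
  have cfres: "\<rho> = residue v (cf \<rho>)" "cf \<rho> \<in> vint v" if "\<rho> \<in> R" for \<rho>
  proof -
    have "\<rho> \<in> residue v ` vint v" using that by (simp add: R_def)
    then obtain t where t: "t \<in> vint v" "\<rho> = residue v t" by blast
    show c: "cf \<rho> \<in> vint v" using cf(1)[OF that] t res_sub by blast
    show "\<rho> = residue v (cf \<rho>)" using res_disj[OF t(1) c, of "cf \<rho>"] cf(1)[OF that] t res_mem[OF c] by simp
  qed
  have finR: "finite R" using fin by (rule rev_finite_subset) (auto simp: R_def)
  define T where "T = (\<Union>\<rho>\<in>R. vball v (y * cf \<rho>) 0)"
  have "orbin e m u y \<le> emeasure M T"
  proof (rule inner_le_set)
    show "T \<in> sets M" unfolding T_def using finR by (intro sets.finite_UN) auto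
    fix x assume "m2mul (m2inv (gxy x y)) (m2mul (gam m u) (gxy x y)) \<in> ZK v e"
    then have t: "ge (x / y) 0" "ge (u*(x / y)^2 - m*(x / y) + 1) k" using mat_cond(2,3)[OF y u] by (auto simp: k_def)
    define t where "t = x / y"
    have tv: "t \<in> vint v" using t by (simp add: vint_ge t_def)
    have t2: "ge (u*t^2 - m*t + 1) k" using t(2) unfolding t_def .
    have rho: "residue v t \<in> R" unfolding R_def using tv res_mem[OF tv] t2 by blast
    define c where "c = cf (residue v t)"
    have "residue v c = residue v t" using cfres[OF rho] by (simp add: c_def)
    then have "ge (c - t) 1" using res_eq cfres(2)[OF rho] tv by (simp add: c_def)
    then have c_t: "ge (t - c) 1" using ge_diff_sym by blast
    have k1': "1 \<le> k" using k1 by (simp add: k_def)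
    have Qc: "ge (u*c^2 - m*c + 1) k" using cf(2)[OF rho] by (simp add: c_def)
    have "ge (t - c) k" by (rule special[OF u D k1' Qc t2 c_t])
    then have "t \<in> vball v c k" by (simp add: vball_ge)
    then have "y * t \<in> vball v (y * c) (k + v y)" using scale_ball[OF y, of c k] by blast
    moreover have "y * t = x" "k + v y = 0" using y by (simp_all add: t_def k_def)
    ultimately have "x \<in> vball v (y * c) 0" by simp
    then show "x \<in> T" unfolding T_def c_def using rho by blast
  qed
  also have "\<dots> \<le> (\<Sum>\<rho>\<in>R. emeasure M (vball v (y * cf \<rho>) 0))"
    unfolding T_def using finR by (intro emeasure_subadditive_finite) auto
  also have "\<dots> = of_nat (card R)" using q_ge2 by (simp add: ball_meas)
  also have "card R \<le> card (residue v ` {t \<in> vint v. t^2 - m * t + u \<in> vmax v})"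
  proof (rule card_inj_on_le)
    show "finite (residue v ` {t \<in> vint v. t^2 - m * t + u \<in> vmax v})"
      using fin by (rule rev_finite_subset) auto
    have props: "inverse (cf \<rho>) \<in> vint v" "v (cf \<rho>) = 0" "cf \<rho> \<noteq> 0"
      "(inverse (cf \<rho>))^2 - m * inverse (cf \<rho>) + u \<in> vmax v" if "\<rho> \<in> R" for \<rho>
    proof -
      have c0: "ge (cf \<rho>) 0" using cfres(2)[OF that] by (simp add: vint_ge)
      have Q1: "ge (u*(cf \<rho>)^2 - m*(cf \<rho>) + 1) 1" using cf(2)[OF that] k1 by (auto simp: k_def intro: ge_mono)
      note uc = unit_root[OF c0 Q1 mg u]
      show "v (cf \<rho>) = 0" "cf \<rho> \<noteq> 0" using uc by auto
      show "inverse (cf \<rho>) \<in> vint v" using uc vinv[of "cf \<rho>"] by (simp add: vint_ge ge_def)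
      have "ge ((inverse (cf \<rho>))^2 * (u*(cf \<rho>)^2 - m*(cf \<rho>) + 1)) (0 + 1)"
        by (rule ge_mult[OF _ Q1]) (use uc vinv[of "cf \<rho>"] vmult in \<open>simp add: ge_def power2_eq_square\<close>)
      moreover have "(inverse (cf \<rho>))^2 * (u*(cf \<rho>)^2 - m*(cf \<rho>) + 1) = (inverse (cf \<rho>))^2 - m * inverse (cf \<rho>) + u"
        using uc by (simp add: field_simps power2_eq_square)
      ultimately show "(inverse (cf \<rho>))^2 - m * inverse (cf \<rho>) + u \<in> vmax v" by (simp add: vmax_ge)
    qed
    show "(\<lambda>\<rho>. residue v (inverse (cf \<rho>))) ` R \<subseteq> residue v ` {t \<in> vint v. t^2 - m * t + u \<in> vmax v}"
      using props by blast
    show "inj_on (\<lambda>\<rho>. residue v (inverse (cf \<rho>))) R"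
    proof (rule inj_onI)
      fix r1 r2 assume r: "r1 \<in> R" "r2 \<in> R" and eq: "residue v (inverse (cf r1)) = residue v (inverse (cf r2))"
      have "ge (inverse (cf r1) - inverse (cf r2)) 1" using eq res_eq props(1)[OF r(1)] props(1)[OF r(2)] by simp
      moreover have "inverse (cf r1) - inverse (cf r2) = inverse (cf r1) * (inverse (cf r2) * (cf r2 - cf r1))"
        using props(3)[OF r(1)] props(3)[OF r(2)] by (simp add: field_simps)
      ultimately have "ge (cf r2 - cf r1) 1"
        using ge_mult_iff props(2,3)[OF r(1)] props(2,3)[OF r(2)] vinv by simp
      then have "residue v (cf r2) = residue v (cf r1)" using res_eq cfres(2) r by simp
      then show "r1 = r2" using cfres(1) r by metis
    qed
  qed
  finally show ?thesis by simp
qed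

end



context LFM begin

definition shj :: "nat \<Rightarrow> nat \<Rightarrow> 'a set" where
  "shj e j = vball v 0 (- int (e + j)) - vball v 0 (- int (e + j) + 1)"

lemma shj_sets[measurable]: "shj e j \<in> sets M"
  unfolding shj_def by measurable

lemma shj_mem: "y \<in> shj e j \<longleftrightarrow> y \<noteq> 0 \<and> v y = - int (e + j)"
  by (auto simp: shj_def vball_ge ge_def)

lemma qpos: "0 < real q" using q_ge2 by simp

lemma qpow: "real q powr (real j + real e) = real q ^ (e + j)"
  using powr_realpow[of "real q" "e + j"] qpos by (simp add: add.commute)

lemma shj_meas: "emeasure M (shj e j) = ennreal ((1 - 1 / real q) * real q ^ (e + j))"
proof -
  have sub: "vball v 0 (- int (e + j) + 1) \<subseteq> vball v 0 (- int (e + j))"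
    by (auto simp: vball_ge intro: ge_mono)
  have "emeasure M (shj e j) = emeasure M (vball v 0 (- int (e + j))) - emeasure M (vball v 0 (- int (e + j) + 1))"
    unfolding shj_def by (rule emeasure_Diff) (use sub in \<open>auto simp: ball_meas\<close>)
  also have "\<dots> = ennreal (real q ^ (e + j)) - ennreal (real q ^ (e + j) / real q)"
  proof -
    have "real q powr (- real_of_int (- int (e + j))) = real q ^ (e + j)"
      using qpow by simp
    moreover have "real q powr (- real_of_int (- int (e + j) + 1)) = real q ^ (e + j) / real q"
    proof -
      have "real q powr (real (e + j) + (- 1)) = real q powr (real (e + j)) * real q powr (- 1)" by (rule powr_add)
      then show ?thesis using qpos qpow by (simp add: powr_minus_divide add.commute)
    qed
    ultimately show ?thesis by (simp add: ball_meas)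
  qed
  also have "\<dots> = ennreal (real q ^ (e + j) - real q ^ (e + j) / real q)"
    using qpos by (intro ennreal_minus) (simp add: field_simps)
  also have "real q ^ (e + j) - real q ^ (e + j) / real q = (1 - 1 / real q) * real q ^ (e + j)"
    by (simp add: algebra_simps)
  finally show ?thesis .
qed

lemma absv_shj: "y \<in> shj e j \<Longrightarrow> 1 / (absv v y)^2 = 1 / real q ^ (2 * (e + j))"
  using qpos by (auto simp: shj_mem absv_def qpow power_mult[symmetric] mult.commute)

lemma outer: fixes F :: "'a \<Rightarrow> ennreal" and c :: "nat \<Rightarrow> ennreal"
  assumes F0: "\<And>y. (\<forall>j. y \<notin> shj e j) \<Longrightarrow> F y = 0"
    and Fc: "\<And>y j. y \<in> shj e j \<Longrightarrow> F y \<le> c j"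
  shows "(\<integral>\<^sup>+ y. F y \<partial>M) \<le> (\<Sum>j. c j * emeasure M (shj e j))"
proof -
  have "(\<integral>\<^sup>+ y. F y \<partial>M) \<le> (\<integral>\<^sup>+ y. (\<Sum>j. c j * indicator (shj e j) y) \<partial>M)"
  proof (rule nn_integral_mono)
    fix y
    show "F y \<le> (\<Sum>j. c j * indicator (shj e j) y)"
    proof (cases "\<exists>j. y \<in> shj e j")
      case True
      then obtain j where j: "y \<in> shj e j" by blast
      have "F y \<le> c j * indicator (shj e j) y" using Fc[OF j] j by simp
      also have "\<dots> \<le> (\<Sum>j. c j * indicator (shj e j) y)"
      proof -
        define g where "g = (\<lambda>j. c j * indicator (shj e j) y :: ennreal)"
        have "sum g {j} \<le> suminf g" by (rule sum_le_suminf) (simp_all add: summableI)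
        moreover have "sum g {j} = g j" by simp
        ultimately have "g j \<le> suminf g" by simp
        then show ?thesis unfolding g_def .
      qed
      finally show ?thesis .
    qed (use F0 in auto)
  qed
  also have "\<dots> = (\<Sum>j. (\<integral>\<^sup>+ y. c j * indicator (shj e j) y \<partial>M))"
    by (rule nn_integral_suminf) measurable
  also have "\<dots> = (\<Sum>j. c j * emeasure M (shj e j))"
    by (simp add: nn_integral_cmult_indicator)
  finally show ?thesis .
qed

end



context LFM begin

lemma geo: "(\<lambda>j. a * (1 / real q)^j) sums (a / (1 - 1 / real q))"
proof -
  have "norm (1 / real q) < 1" using q_ge2 by simp
  then have "(\<lambda>j. (1 / real q)^j) sums (1 / (1 - 1 / real q))" by (rule geometric_sums)
  then show ?thesis using sums_mult by fastforce
qed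

lemma ennsum: assumes "\<And>j. 0 \<le> t j" "t sums s" shows "(\<Sum>j. ennreal (t j)) = ennreal s"
proof -
  have "s = suminf t" using assms(2) by (rule sums_unique)
  then have "0 \<le> s" using assms suminf_nonneg sums_summable by metis
  then have "(\<lambda>j. ennreal (t j)) sums ennreal s" using assms by simp
  then show ?thesis by (rule sums_unique[symmetric])
qed

lemma main_gen: assumes u: "u \<noteq> 0" "v u = 0"
  and D: "m^2 - 4*u \<noteq> 0" "0 \<le> v (m^2 - 4*u)"
  shows "(\<integral>\<^sup>+ y. (if y = 0 then 0 else ennreal (1 / (absv v y)\<^sup>2) * orbin e m u y) \<partial>M)
     \<le> ennreal (4 * real q powr (real_of_int (v (m^2 - 4*u)) / 2 - real e))"
proof -
  define C where "C = 2 * real q powr (real_of_int (v (m^2 - 4*u)) / 2)"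
  have C0: "0 \<le> C" by (simp add: C_def)
  define c where "c = (\<lambda>j. ennreal (1 / real q ^ (2 * (e + j))) * ennreal C)"
  have "(\<integral>\<^sup>+ y. (if y = 0 then 0 else ennreal (1 / (absv v y)\<^sup>2) * orbin e m u y) \<partial>M)
     \<le> (\<Sum>j. c j * emeasure M (shj e j))"
  proof (rule outer)
    fix y assume "\<forall>j. y \<notin> shj e j"
    then have "y = 0 \<or> - v y < int e"
      using shj_mem[of y e "nat (- v y) - e"] by (cases "y = 0") auto
    then show "(if y = 0 then 0 else ennreal (1 / (absv v y)\<^sup>2) * orbin e m u y) = 0"
      using inner_zero[OF _ u] by auto
  next
    fix y j assume y: "y \<in> shj e j"
    have "orbin e m u y \<le> ennreal C" unfolding C_def using y by (intro inner_gen[OF _ u D]) (simp add: shj_mem)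
    then show "(if y = 0 then 0 else ennreal (1 / (absv v y)\<^sup>2) * orbin e m u y) \<le> c j"
      using y absv_shj[OF y] by (auto simp: c_def shj_mem intro: mult_left_mono)
  qed
  also have "\<dots> = (\<Sum>j. ennreal (C * (1 - 1 / real q) / real q ^ e * (1 / real q)^j))"
  proof (rule suminf_cong)
    fix j
    define a where "a = 1 / real q ^ (2 * (e + j))"
    define b where "b = (1 - 1 / real q) * real q ^ (e + j)"
    have a0: "0 \<le> a" unfolding a_def by simp
    have b0: "0 \<le> b" unfolding b_def using q_ge2 by simp
    have "c j * emeasure M (shj e j) = ennreal a * ennreal C * ennreal b"
      unfolding c_def shj_meas a_def b_def ..
    also have "\<dots> = ennreal (a * C * b)"
      using a0 b0 C0 by (simp add: ennreal_mult)
    finally have "c j * emeasure M (shj e j) = ennreal (1 / real q ^ (2 * (e + j)) * C * ((1 - 1 / real q) * real q ^ (e + j)))"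
      unfolding a_def b_def .
    also have "1 / real q ^ (2 * (e + j)) * C * ((1 - 1 / real q) * real q ^ (e + j)) = C * (1 - 1 / real q) / real q ^ e * (1 / real q)^j"
    proof -
      have p: "real q ^ (2 * (e + j)) = real q^e * real q^e * real q^j * real q^j"
        by (simp add: mult_2 power_add)
      show ?thesis unfolding p using qpos by (simp add: field_simps power_add power_divide)
    qed
    finally show "c j * emeasure M (shj e j) = ennreal (C * (1 - 1 / real q) / real q ^ e * (1 / real q)^j)" .
  qed
  also have "\<dots> = ennreal (C * (1 - 1 / real q) / real q ^ e / (1 - 1 / real q))"
    by (rule ennsum[OF _ geo]) (use qpos C0 q_ge2 in \<open>auto intro!: mult_nonneg_nonneg divide_nonneg_nonneg\<close>)
  also have "\<dots> \<le> ennreal (4 * real q powr (real_of_int (v (m^2 - 4*u)) / 2 - real e))"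
  proof (rule ennreal_leI)
    have q1: "1 - 1 / real q \<noteq> 0" using q_ge2 by simp
    have "C * (1 - 1 / real q) / real q ^ e / (1 - 1 / real q) = C / real q ^ e" using q1 by simp
    also have "\<dots> = 2 * real q powr (real_of_int (v (m^2 - 4*u)) / 2 - real e)"
      unfolding C_def using qpos by (simp add: powr_diff powr_realpow)
    also have "\<dots> \<le> 4 * real q powr (real_of_int (v (m^2 - 4*u)) / 2 - real e)" by simp
    finally show "C * (1 - 1 / real q) / real q ^ e / (1 - 1 / real q) \<le> 4 * real q powr (real_of_int (v (m^2 - 4*u)) / 2 - real e)" .
  qed
  finally show ?thesis .
qed

lemma main_sp: assumes u: "u \<noteq> 0" "v u = 0" and m: "m \<in> vint v"
  and D: "m^2 - 4*u \<noteq> 0" "v (m^2 - 4*u) = 0"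
  shows "(\<integral>\<^sup>+ y. (if y = 0 then 0 else ennreal (1 / (absv v y)\<^sup>2) * orbin 0 m u y) \<partial>M)
     \<le> ennreal ((real q - 1 + real (card (residue v ` {t \<in> vint v. t\<^sup>2 - m * t + u \<in> vmax v}))) / real q)"
proof -
  define N where "N = card (residue v ` {t \<in> vint v. t\<^sup>2 - m * t + u \<in> vmax v})"
  define c where "c = (\<lambda>j. ennreal (1 / real q ^ (2 * j)) * ennreal (if j = 0 then 1 else real N))"
  have "(\<integral>\<^sup>+ y. (if y = 0 then 0 else ennreal (1 / (absv v y)\<^sup>2) * orbin 0 m u y) \<partial>M)
     \<le> (\<Sum>j. c j * emeasure M (shj 0 j))"
  proof (rule outer)
    fix y assume "\<forall>j. y \<notin> shj 0 j"
    then have "y = 0 \<or> - v y < int 0"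
      using shj_mem[of y 0 "nat (- v y)"] by (cases "y = 0") (auto split: if_split_asm)
    then show "(if y = 0 then 0 else ennreal (1 / (absv v y)\<^sup>2) * orbin 0 m u y) = 0"
      using inner_zero[OF _ u] by auto
  next
    fix y j assume y: "y \<in> shj 0 j"
    have "orbin 0 m u y \<le> ennreal (if j = 0 then 1 else real N)"
    proof (cases "j = 0")
      case True then show ?thesis using inner_sp0[OF _ u] y by (simp add: shj_mem)
    next
      case False
      then have "orbin 0 m u y \<le> of_nat N" unfolding N_def
        using y by (intro inner_sp1[OF _ u m D]) (auto simp: shj_mem)
      then show ?thesis using False by (simp add: ennreal_of_nat_eq_real_of_nat)
    qed
    then show "(if y = 0 then 0 else ennreal (1 / (absv v y)\<^sup>2) * orbin 0 m u y) \<le> c j"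
      using y absv_shj[OF y] by (auto simp: c_def shj_mem intro: mult_left_mono)
  qed
  also have "\<dots> = (\<Sum>j. ennreal (if j = 0 then 1 - 1 / real q else real N * (1 - 1 / real q) * (1 / real q)^j))"
  proof (rule suminf_cong)
    fix j
    define a where "a = 1 / real q ^ (2 * j)"
    define b where "b = (1 - 1 / real q) * real q ^ (0 + j)"
    define C where "C = (if j = 0 then 1 else real N)"
    have a0: "0 \<le> a" unfolding a_def by simp
    have b0: "0 \<le> b" unfolding b_def using q_ge2 by simp
    have C0: "0 \<le> C" unfolding C_def by simp
    have "c j * emeasure M (shj 0 j) = ennreal a * ennreal C * ennreal b"
      unfolding c_def shj_meas a_def b_def C_def ..
    also have "\<dots> = ennreal (a * C * b)"
      using a0 b0 C0 by (simp add: ennreal_mult)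
    also have "a * C * b = (if j = 0 then 1 - 1 / real q else real N * (1 - 1 / real q) * (1 / real q)^j)"
    proof -
      have p: "real q ^ (2 * j) = real q^j * real q^j" by (simp add: mult_2 power_add)
      show ?thesis unfolding a_def b_def C_def p using qpos by (simp add: field_simps power_divide)
    qed
    finally show "c j * emeasure M (shj 0 j) = ennreal (if j = 0 then 1 - 1 / real q else real N * (1 - 1 / real q) * (1 / real q)^j)" .
  qed
  also have "\<dots> = ennreal ((real q - 1 + real N) / real q)"
  proof (rule ennsum)
    show "0 \<le> (if j = 0 then 1 - 1 / real q else real N * (1 - 1 / real q) * (1 / real q)^j)" for j
      using q_ge2 by simp
    have s1: "(\<lambda>j. real N * (1 - 1 / real q) * (1 / real q)^j) sums (real N * (1 - 1 / real q) / (1 - 1 / real q))"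
      by (rule geo)
    have s2: "(\<lambda>j. if j = 0 then (\<lambda>_. (1 - 1 / real q) - real N * (1 - 1 / real q)) j else 0) sums
       ((\<lambda>_. (1 - 1 / real q) - real N * (1 - 1 / real q)) 0)"
      by (rule sums_single)
    have "(\<lambda>j. real N * (1 - 1 / real q) * (1 / real q)^j + (if j = 0 then (1 - 1 / real q) - real N * (1 - 1 / real q) else 0))
       sums (real N * (1 - 1 / real q) / (1 - 1 / real q) + ((1 - 1 / real q) - real N * (1 - 1 / real q)))"
      using sums_add[OF s1 s2] by simp
    moreover have "real N * (1 - 1 / real q) / (1 - 1 / real q) + ((1 - 1 / real q) - real N * (1 - 1 / real q))
       = (real q - 1 + real N) / real q"
      using q_ge2 by (simp add: field_simps)
    moreover have "(\<lambda>j. real N * (1 - 1 / real q) * (1 / real q)^j + (if j = 0 then (1 - 1 / real q) - real N * (1 - 1 / real q) else 0))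
       = (\<lambda>j. if j = 0 then 1 - 1 / real q else real N * (1 - 1 / real q) * (1 / real q)^j)"
      by (rule ext) simp
    ultimately show "(\<lambda>j. if j = 0 then 1 - 1 / real q else real N * (1 - 1 / real q) * (1 / real q)^j)
       sums ((real q - 1 + real N) / real q)" by simp
  qed
  finally show ?thesis unfolding N_def .
qed

end


theorem lemma3p6:
  fixes v :: "'a::field \<Rightarrow> int" and M :: "'a measure" and e :: nat and m u :: 'a
  assumes "nonarch_local_field v"
    and "haar_measure v M"
    and "m \<in> vint v"
    and "u \<noteq> 0" and "v u = 0"
  shows "(\<integral>\<^sup>+ y. (if y = 0 then 0 else
            ennreal (1 / (absv v y)\<^sup>2) *
            (\<integral>\<^sup>+ x. indicator (ZK v e)
                 (m2mul (m2inv (gxy x y)) (m2mul (gam m u) (gxy x y))) \<partial>M)) \<partial>M)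
         \<le> (let q = real (resq v);
                 D = m\<^sup>2 - 4 * u;
                 N = card (residue v ` {t \<in> vint v. t\<^sup>2 - m * t + u \<in> vmax v})
             in if D = 0 then top
                else if e = 0 \<and> v D = 0 then ennreal ((q - 1 + real N) / q)
                else ennreal (4 * q powr (real_of_int (v D) / 2 - real e)))"
  proof -
  have VA: "val_axioms v" and fin: "finite (residue v ` vint v)"
    using assms(1) by (auto simp: nonarch_local_field_def)
  interpret LFM v M by unfold_locales (use VA fin assms(2) in auto)
  have eqI: "(\<integral>\<^sup>+ y. (if y = 0 then 0 else
            ennreal (1 / (absv v y)\<^sup>2) *
            (\<integral>\<^sup>+ x. indicator (ZK v e)
                 (m2mul (m2inv (gxy x y)) (m2mul (gam m u) (gxy x y))) \<partial>M)) \<partial>M)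
       = (\<integral>\<^sup>+ y. (if y = 0 then 0 else ennreal (1 / (absv v y)\<^sup>2) * orbin e m u y) \<partial>M)"
    unfolding orbin_def by (rule refl)
  have u: "u \<noteq> 0" "v u = 0" using assms(4,5) by auto
  have m: "m \<in> vint v" by (rule assms(3))
  show ?thesis
  proof (cases "m\<^sup>2 - 4 * u = 0")
    case True then show ?thesis by (simp add: Let_def)
  next
    case Dnz: False
    have "ge (m\<^sup>2 - 4 * u) 0"
    proof (rule ge_diff)
      have "ge (m * m) (0 + 0)" using m by (intro ge_mult) (auto simp: vint_ge)
      then show "ge (m\<^sup>2) 0" by (simp add: power2_eq_square)
      have "ge (4 * u) (0 + 0)" using u by (intro ge_mult ge4) (simp add: ge_def)
      then show "ge (4 * u) 0" by simp
    qed
    then have D0: "0 \<le> v (m\<^sup>2 - 4 * u)" using Dnz by (simp add: ge_def)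
    show ?thesis
    proof (cases "e = 0 \<and> v (m\<^sup>2 - 4 * u) = 0")
      case True
      then have e0: "e = 0" and vD: "v (m\<^sup>2 - 4 * u) = 0" by auto
      show ?thesis unfolding Let_def eqI unfolding e0 using main_sp[OF u m Dnz vD] Dnz vD by simp
    next
      case False
      show ?thesis unfolding Let_def eqI using main_gen[OF u Dnz D0, of e] Dnz False by auto
    qed
  qed
qed

end
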